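(* Let $F\in\{\mathbb{R},\mathbb{C}\}$ and let $\pi$ be an irreducible unitary representation of $G_n=GL(n,F)$. Then there is a decomposition $n=k+l$ with $k,l\ge0$, an even irreducible unitary representation $\pi_e$ of $G_k$ and an odd irreducible unitary representation $\pi_o$ of $G_l$, uniquely determined up to isomorphism, such that $\pi\simeq\pi_e\times\pi_o$.
   Context: Normalized parabolic induction: for Hilbert representations $\sigma_i$ of $G_{n_i}$, $\sigma_1\times\dots\times\sigma_k$ is the normalized induction to $G_{n_1+\dots+n_k}$ from the standard block upper triangular parabolic of type $(n_1,\dots,n_k)$ of $\sigma_1\otimes\dots\otimes\sigma_k$. $|\ |^s\sigma$ means $g\mapsto|\det g|^s\sigma(g)$. For a square-integrable $\delta$ in the unitary dual of $G_r$ and $t\ge1$, $U(\delta,t)$ is the unique irreducible quotient of $|\ |^{\frac{t-1}2}\delta\times|\ |^{\frac{t-3}2}\delta\times\dots\times|\ |^{\frac{1-t}2}\delta$; for $0<\alpha<\frac12$, $\pi(\delta,t,\alpha)=|\ |^{\alpha}U(\delta,t)\times|\ |^{-\alpha}U(\delta,t)$. Let $B$ be the set of all such representations. Every irreducible unitary $\pi$ of $G_n$ is $\pi_1\times\dots\times\pi_k$ for a unique multiset $\{\pi_i\}\subset B$, and products of elements of $B$ are irreducible unitary. The $SL(2)$-type $\mathcal{V}(\pi)$ is the partition of $n$ with: $\mathcal{V}(U(\delta,t))$ = $r$ parts equal to $t$; $\mathcal{V}(\pi(\delta,t,\alpha))$ = $2r$ parts equal to $t$; $\mathcal{V}(\pi_1\times\pi_2)$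 = multiset union of $\mathcal{V}(\pi_1),\mathcal{V}(\pi_2)$. $\pi$ is called even (resp. odd) if all parts of $\mathcal{V}(\pi)$ are even (resp. odd). The trivial representation of $G_0$ is allowed (so $k$ or $l$ may be $0$). *)

theory Defs
  imports Complex_Main "HOL-Library.Multiset"
begin

text \<open>Abstract model of the unitary dual of GL(n,F), F = R or C, via the classification
recalled in the context.  The type 'd stands for (isomorphism classes of) square-integrable
representations delta in the unitary dual of some G_r, and deg delta = r.
An element of B is either U(delta,t) or pi(delta,t,alpha).  An irreducible unitary
representation of G_n, up to isomorphism, is the (unique) finite multiset of elements of B
whose product it is; products are multiset sums.\<close>

datatype 'd bsummand = U 'd nat | Pi 'd nat real

fun valid_B :: "('d \<Rightarrow> nat) \<Rightarrow> 'd bsummand \<Rightarrow> bool" where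
  "valid_B deg (U d t) = (t \<ge> 1)"
| "valid_B deg (Pi d t a) = (t \<ge> 1 \<and> 0 < a \<and> a < 1/2)"

text \<open>The n such that the B-element is a representation of G_n.\<close>
fun bdeg :: "('d \<Rightarrow> nat) \<Rightarrow> 'd bsummand \<Rightarrow> nat" where
  "bdeg deg (U d t) = deg d * t"
| "bdeg deg (Pi d t a) = 2 * deg d * t"

text \<open>SL(2)-type of a B-element, as a multiset of parts.\<close>
fun V_B :: "('d \<Rightarrow> nat) \<Rightarrow> 'd bsummand \<Rightarrow> nat multiset" where
  "V_B deg (U d t) = replicate_mset (deg d) t"
| "V_B deg (Pi d t a) = replicate_mset (2 * deg d) t"

definition unitary_irrep :: "('d \<Rightarrow> nat) \<Rightarrow> nat \<Rightarrow> 'd bsummand multiset \<Rightarrow> bool" where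
  "unitary_irrep deg n M \<longleftrightarrow> (\<forall>b\<in>#M. valid_B deg b) \<and> sum_mset (image_mset (bdeg deg) M) = n"

definition ind_prod :: "'d bsummand multiset \<Rightarrow> 'd bsummand multiset \<Rightarrow> 'd bsummand multiset" where
  "ind_prod M1 M2 = M1 + M2"

definition sl2type :: "('d \<Rightarrow> nat) \<Rightarrow> 'd bsummand multiset \<Rightarrow> nat multiset" where
  "sl2type deg M = sum_mset (image_mset (V_B deg) M)"

definition even_rep :: "('d \<Rightarrow> nat) \<Rightarrow> 'd bsummand multiset \<Rightarrow> bool" where
  "even_rep deg M \<longleftrightarrow> (\<forall>p\<in>#sl2type deg M. even p)"

definition odd_rep :: "('d \<Rightarrow> nat) \<Rightarrow> 'd bsummand multiset \<Rightarrow> bool" where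
  "odd_rep deg M \<longleftrightarrow> (\<forall>p\<in>#sl2type deg M. odd p)"

end

theory Submission
  imports Defs
begin

fun par :: "'d bsummand \<Rightarrow> nat" where
  "par (U d t) = t" | "par (Pi d t a) = t"

lemma set_VB2:
  assumes "\<forall>d. deg d \<ge> 1"
  shows "set_mset (V_B deg b) = {par b}"
  proof (cases b)
  case (U d t) then have "deg d \<noteq> 0" using assms by (metis not_one_le_zero)
  then show ?thesis using U by simp
next
  case (Pi d t a) then have "deg d \<noteq> 0" using assms by (metis not_one_le_zero)
  then show ?thesis using Pi by simp
qed

lemma in_sl2: "p \<in># sl2type deg M \<longleftrightarrow> (\<exists>b\<in>#M. p \<in># V_B deg b)"
  unfolding sl2type_def by (induction M) auto

lemma even_iff:
  assumes "\<forall>d. deg d \<ge> 1"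
  shows "even_rep deg M \<longleftrightarrow> (\<forall>b\<in>#M. even (par b))"
  proof -
  have "p \<in># V_B deg b \<longleftrightarrow> p = par b" for p b using set_VB2[OF assms] by (metis singleton_iff)
  then show ?thesis unfolding even_rep_def Ball_def in_sl2 by auto
qed

lemma odd_iff:
  assumes "\<forall>d. deg d \<ge> 1"
  shows "odd_rep deg M \<longleftrightarrow> (\<forall>b\<in>#M. odd (par b))"
  proof -
  have "p \<in># V_B deg b \<longleftrightarrow> p = par b" for p b using set_VB2[OF assms] by (metis singleton_iff)
  then show ?thesis unfolding odd_rep_def Ball_def in_sl2 by auto
qed

theorem corollary2p8:
  fixes deg :: "'d \<Rightarrow> nat" and n :: nat and \<pi> :: "'d bsummand multiset"
  assumes "\<forall>d. deg d \<ge> 1"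
    and "unitary_irrep deg n \<pi>"
  shows "\<exists>!(k, l, \<pi>e, \<pi>o). k + l = n
           \<and> unitary_irrep deg k \<pi>e \<and> even_rep deg \<pi>e
           \<and> unitary_irrep deg l \<pi>o \<and> odd_rep deg \<pi>o
           \<and> \<pi> = ind_prod \<pi>e \<pi>o"
proof -
  define E where "E = filter_mset (\<lambda>b. even (par b)) \<pi>"
  define Od where "Od = filter_mset (\<lambda>b. odd (par b)) \<pi>"
  have EO: "\<pi> = E + Od" unfolding E_def Od_def by (metis multiset_partition)
  let ?s = "\<lambda>M. sum_mset (image_mset (bdeg deg) M)"
  let ?P = "\<lambda>(k, l, \<pi>e, \<pi>o). k + l = n
           \<and> unitary_irrep deg k \<pi>e \<and> even_rep deg \<pi>e
           \<and> unitary_irrep deg l \<pi>o \<and> odd_rep deg \<pi>o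
           \<and> \<pi> = ind_prod \<pi>e \<pi>o"
  have v: "\<forall>b\<in>#\<pi>. valid_B deg b" and sn: "?s \<pi> = n"
    using assms(2) unfolding unitary_irrep_def by auto
  have Ee: "even_rep deg E" unfolding even_iff[OF assms(1)] E_def by simp
  have Oo: "odd_rep deg Od" unfolding odd_iff[OF assms(1)] Od_def by simp
  have vE: "\<forall>b\<in>#E. valid_B deg b" using v unfolding E_def by simp
  have vO: "\<forall>b\<in>#Od. valid_B deg b" using v unfolding Od_def by simp
  have ssum: "?s E + ?s Od = n" using sn arg_cong[OF EO, of ?s] by simp
  have ex: "?P (?s E, ?s Od, E, Od)"
    using Ee Oo vE vO ssum EO unfolding unitary_irrep_def ind_prod_def by simp
  have un: "x = (?s E, ?s Od, E, Od)" if "?P x" for x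
  proof -
    obtain k l A B where x: "x = (k, l, A, B)" by (cases x) auto
    have h: "k + l = n" "unitary_irrep deg k A" "even_rep deg A"
      "unitary_irrep deg l B" "odd_rep deg B" "\<pi> = A + B"
      using that x by (auto simp: ind_prod_def)
    have Ae: "\<forall>b\<in>#A. even (par b)" and Bo: "\<forall>b\<in>#B. odd (par b)"
      using h even_iff[OF assms(1)] odd_iff[OF assms(1)] by auto
    have a1: "filter_mset (\<lambda>b. even (par b)) A = A" using Ae by (simp add: filter_mset_eq_conv)
    have a2: "filter_mset (\<lambda>b. even (par b)) B = {#}" using Bo by simp
    have b1: "filter_mset (\<lambda>b. odd (par b)) B = B" using Bo by (simp add: filter_mset_eq_conv)
    have b2: "filter_mset (\<lambda>b. odd (par b)) A = {#}" using Ae by simp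
    have "E = A" unfolding E_def h(6) filter_union_mset a1 a2 by simp
    moreover have "Od = B" unfolding Od_def h(6) filter_union_mset b1 b2 by simp
    ultimately show ?thesis using h(2,4) x unfolding unitary_irrep_def by simp
  qed
  show ?thesis by (rule ex1I[of ?P, OF ex un]) (simp add: prod.case_eq_if)
qed

end
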